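(* Let $T$ be an infinite rooted ordered tree with root $\varnothing$, let $\lambda\in(1,\infty)$ and let $(Y_n)_{n\in\mathbb N}$ be the $\lambda$-biased random walk on $T$ (with arbitrary initial distribution). Assume $Y$ is recurrent. Then for all $\ell,n_1,n_2\in\mathbb N$ with $n_1<n_2$, $$\mathbf P\Big(|Y_{n_1}|+|Y_{n_2}|-2\min_{n_1\le n\le n_2}|Y_n|\ge2\ell+d_{\mathtt{gr}}(Y_{n_1},Y_{n_2})\Big)\le(n_2-n_1)\frac{\lambda-1}{\lambda^\ell-1}.$$
   Context: $\lambda$-biased random walk: from $x\ne\varnothing$ with $k_x(T)$ children, go to the parent w.p. $\lambda/(\lambda+k_x(T))$ and to each child w.p. $1/(\lambda+k_x(T))$; from $\varnothing$ go to each child w.p. $1/k_\varnothing(T)$. $|x|$ is the height of $x$ (graph distance to $\varnothing$), $d_{\mathtt{gr}}$ the graph distance on $T$. *)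

theory Defs
  imports "HOL-Probability.Probability"
begin

text \<open>Rooted ordered (Ulam--Harris) trees: vertices are lists of naturals, the root is [],
  the children of x are x@[0], ..., x@[k-1].  Finite number of children per vertex.\<close>

definition ordered_tree :: "nat list set \<Rightarrow> bool" where
  "ordered_tree T \<longleftrightarrow>
     [] \<in> T \<and>
     (\<forall>x i. x @ [i] \<in> T \<longrightarrow> x \<in> T) \<and>
     (\<forall>x i j. x @ [i] \<in> T \<and> j < i \<longrightarrow> x @ [j] \<in> T) \<and>
     (\<forall>x\<in>T. finite {i. x @ [i] \<in> T})"

definition num_children :: "nat list set \<Rightarrow> nat list \<Rightarrow> nat" where
  "num_children T x = card {i. x @ [i] \<in> T}"

definition height :: "nat list \<Rightarrow> nat" where
  "height x = length x"

definition tree_adj :: "nat list set \<Rightarrow> nat list \<Rightarrow> nat list \<Rightarrow> bool" where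
  "tree_adj T x y \<longleftrightarrow> x \<in> T \<and> y \<in> T \<and> (\<exists>i. y = x @ [i] \<or> x = y @ [i])"

definition tree_path :: "nat list set \<Rightarrow> nat list list \<Rightarrow> bool" where
  "tree_path T ps \<longleftrightarrow> ps \<noteq> [] \<and> set ps \<subseteq> T \<and>
     (\<forall>k. Suc k < length ps \<longrightarrow> tree_adj T (ps ! k) (ps ! Suc k))"

definition d_gr :: "nat list set \<Rightarrow> nat list \<Rightarrow> nat list \<Rightarrow> nat" where
  "d_gr T x y = (LEAST n. \<exists>ps. tree_path T ps \<and> hd ps = x \<and> last ps = y \<and> length ps = Suc n)"

definition lbrw_step :: "nat list set \<Rightarrow> real \<Rightarrow> nat list \<Rightarrow> nat list pmf" where
  "lbrw_step T lam x =
     (if x = [] then pmf_of_set {[i] | i. i < num_children T []}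
      else bind_pmf (bernoulli_pmf (lam / (lam + real (num_children T x))))
             (\<lambda>b. if b then return_pmf (butlast x)
                  else pmf_of_set {x @ [i] | i. i < num_children T x}))"

text \<open>Law of the trajectory (Y_0, ..., Y_N) with initial distribution mu, as a list of length N+1.\<close>

primrec lbrw_path :: "nat list set \<Rightarrow> real \<Rightarrow> nat list pmf \<Rightarrow> nat \<Rightarrow> nat list list pmf" where
  "lbrw_path T lam mu 0 = map_pmf (\<lambda>x. [x]) mu"
| "lbrw_path T lam mu (Suc n) =
     bind_pmf (lbrw_path T lam mu n) (\<lambda>ys. map_pmf (\<lambda>y. ys @ [y]) (lbrw_step T lam (last ys)))"

definition lbrw_recurrent :: "nat list set \<Rightarrow> real \<Rightarrow> bool" where
  "lbrw_recurrent T lam \<longleftrightarrow>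
     (\<lambda>n. measure_pmf.prob (lbrw_path T lam (return_pmf []) n)
            {ys. \<exists>k\<in>{1..n}. ys ! k = []}) \<longlonglongrightarrow> 1"

end

theory Submission
  imports Defs
begin

fun cpl :: "nat list \<Rightarrow> nat list \<Rightarrow> nat" where
  "cpl (a#xs) (b#ys) = (if a = b then Suc (cpl xs ys) else 0)"
| "cpl _ _ = 0"

lemma cpl_le1: "cpl x y \<le> length x"
  by (induction x y rule: cpl.induct) auto

lemma cpl_le2: "cpl x y \<le> length y"
  by (induction x y rule: cpl.induct) auto

lemma cpl_take: "j \<le> cpl x y \<Longrightarrow> take j x = take j y"
proof (induction x y arbitrary: j rule: cpl.induct)
  case (1 a xs b ys)
  then show ?case by (cases j) (auto split: if_splits)
qed auto

lemma cpl_ge: "take j x = take j y \<Longrightarrow> j \<le> length x \<Longrightarrow> j \<le> length y \<Longrightarrow> j \<le> cpl x y"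
proof (induction x y arbitrary: j rule: cpl.induct)
  case (1 a xs b ys)
  then show ?case by (cases j) auto
qed auto

lemma cpl_snoc: "cpl (u @ [i]) z = (if cpl u z = length u \<and> length u < length z \<and> z ! length u = i
    then Suc (length u) else cpl u z)"
proof (induction u arbitrary: z)
  case Nil
  then show ?case by (cases z) auto
next
  case (Cons a u)
  then show ?case by (cases z) auto
qed

lemma cpl_self: "cpl x x = length x"
  by (induction x) auto

definition nb :: "nat list \<Rightarrow> nat list \<Rightarrow> bool" where
  "nb x y \<longleftrightarrow> (x \<noteq> [] \<and> y = butlast x) \<or> (\<exists>i. y = x @ [i])"

lemma lbrw_path_supp0:
  "ys \<in> set_pmf (lbrw_path T lam mu n) \<Longrightarrow> length ys = Suc n \<and> ys ! 0 \<in> set_pmf mu"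
proof (induction n arbitrary: ys)
  case 0
  then show ?case by auto
next
  case (Suc n)
  then show ?case by (auto simp: nth_append)
qed

lemma lbrw_path_stitch:
  "lbrw_path T lam mu (m + k) = bind_pmf (lbrw_path T lam mu m)
     (\<lambda>ys. map_pmf (\<lambda>zs. ys @ tl zs) (lbrw_path T lam (return_pmf (last ys)) k))"
proof (induction k)
  case 0
  then show ?case by (simp add: map_pmf_def bind_return_pmf bind_return_pmf')
next
  case (Suc k)
  have "lbrw_path T lam mu (m + Suc k) = bind_pmf (lbrw_path T lam mu (m + k))
     (\<lambda>ys. map_pmf (\<lambda>y. ys @ [y]) (lbrw_step T lam (last ys)))" by simp
  also have "\<dots> = bind_pmf (lbrw_path T lam mu m)
     (\<lambda>ys. map_pmf (\<lambda>zs. ys @ tl zs) (lbrw_path T lam (return_pmf (last ys)) (Suc k)))"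
    unfolding Suc bind_assoc_pmf
  proof (rule bind_pmf_cong[OF refl])
    fix ys assume ys: "ys \<in> set_pmf (lbrw_path T lam mu m)"
    then have ysne: "ys \<noteq> []" using lbrw_path_supp0[OF ys] by auto
    show "bind_pmf (map_pmf (\<lambda>zs. ys @ tl zs) (lbrw_path T lam (return_pmf (last ys)) k))
          (\<lambda>ys. map_pmf (\<lambda>y. ys @ [y]) (lbrw_step T lam (last ys))) =
         map_pmf (\<lambda>zs. ys @ tl zs) (lbrw_path T lam (return_pmf (last ys)) (Suc k))"
      unfolding bind_map_pmf lbrw_path.simps map_bind_pmf
    proof (rule bind_pmf_cong[OF refl])
      fix zs assume zs: "zs \<in> set_pmf (lbrw_path T lam (return_pmf (last ys)) k)"
      from lbrw_path_supp0[OF zs] have z: "length zs = Suc k" "zs ! 0 = last ys" by auto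
      have l: "last (ys @ tl zs) = last zs"
      proof (cases "tl zs = []")
        case True
        then have "zs = [zs ! 0]" using z by (cases zs) auto
        then show ?thesis using True z ysne by (metis append_Nil2 last.simps)
      next
        case False
        then show ?thesis using z by (cases zs) auto
      qed
      have t: "tl (zs @ [y]) = tl zs @ [y]" for y using z by (cases zs) auto
      show "map_pmf (\<lambda>y. (ys @ tl zs) @ [y]) (lbrw_step T lam (last (ys @ tl zs))) =
            map_pmf (\<lambda>zsa. ys @ tl zsa) (map_pmf (\<lambda>y. zs @ [y]) (lbrw_step T lam (last zs)))"
        by (simp add: l pmf.map_comp o_def t)
    qed
  qed
  finally show ?case .
qed

lemma lbrw_path_first:
  "lbrw_path T lam (return_pmf x) (Suc k) = bind_pmf (lbrw_step T lam x)
     (\<lambda>y. map_pmf (\<lambda>zs. x # zs) (lbrw_path T lam (return_pmf y) k))"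
proof -
  have "lbrw_path T lam (return_pmf x) (Suc k) = lbrw_path T lam (return_pmf x) (1 + k)" by simp
  also have "\<dots> = bind_pmf (lbrw_path T lam (return_pmf x) 1)
     (\<lambda>ys. map_pmf (\<lambda>zs. ys @ tl zs) (lbrw_path T lam (return_pmf (last ys)) k))"
    by (rule lbrw_path_stitch)
  also have "\<dots> = bind_pmf (lbrw_step T lam x)
     (\<lambda>y. map_pmf (\<lambda>zs. [x, y] @ tl zs) (lbrw_path T lam (return_pmf y) k))"
    by (simp add: bind_return_pmf bind_map_pmf map_pmf_def[symmetric])
  also have "\<dots> = bind_pmf (lbrw_step T lam x)
     (\<lambda>y. map_pmf (\<lambda>zs. x # zs) (lbrw_path T lam (return_pmf y) k))"
  proof (rule bind_pmf_cong[OF refl], rule map_pmf_cong[OF refl])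
    fix y zs assume "zs \<in> set_pmf (lbrw_path T lam (return_pmf y) k)"
    from lbrw_path_supp0[OF this] have "length zs = Suc k" "zs ! 0 = y" by auto
    then show "[x, y] @ tl zs = x # zs" by (cases zs) auto
  qed
  finally show ?thesis .
qed

lemma prob_bind_pmf:
  "measure_pmf.prob (bind_pmf M N) X = measure_pmf.expectation M (\<lambda>x. measure_pmf.prob (N x) X)"
proof -
  have int: "integrable (measure_pmf M) (\<lambda>x. measure_pmf.prob (N x) X)"
    by (rule measure_pmf.integrable_const_bound[where B=1]) auto
  have "ennreal (measure_pmf.prob (bind_pmf M N) X) = emeasure (bind_pmf M N) X"
    by (simp add: measure_pmf.emeasure_eq_measure)
  also have "\<dots> = (\<integral>\<^sup>+x. emeasure (N x) X \<partial>M)"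
    by (rule emeasure_bind_pmf)
  also have "\<dots> = (\<integral>\<^sup>+x. ennreal (measure_pmf.prob (N x) X) \<partial>M)"
    by (simp add: measure_pmf.emeasure_eq_measure)
  also have "\<dots> = ennreal (measure_pmf.expectation M (\<lambda>x. measure_pmf.prob (N x) X))"
    by (rule nn_integral_eq_integral[OF int]) auto
  finally show ?thesis by (simp add: ennreal_inj)
qed

lemma integral_bind_pmf_nn:
  fixes f :: "'b \<Rightarrow> real"
  assumes "\<And>x. 0 \<le> f x" "\<And>x. f x \<le> B"
  shows "measure_pmf.expectation (bind_pmf M N) f = measure_pmf.expectation M (\<lambda>x. measure_pmf.expectation (N x) f)"
proof -
  have int1: "integrable (measure_pmf P) f" for P
    by (rule measure_pmf.integrable_const_bound[where B=B]) (use assms in \<open>auto intro: abs_of_nonneg\<close>)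
  have nn: "0 \<le> measure_pmf.expectation P f" for P by (rule Bochner_Integration.integral_nonneg) (use assms in auto)
  have le: "measure_pmf.expectation P f \<le> B" for P
  proof -
    have "measure_pmf.expectation P f \<le> measure_pmf.expectation P (\<lambda>_. B)"
      by (rule integral_mono[OF int1]) (use assms in auto)
    then show ?thesis by simp
  qed
  have int2: "integrable (measure_pmf M) (\<lambda>x. measure_pmf.expectation (N x) f)"
    by (rule measure_pmf.integrable_const_bound[where B=B]) (use nn le in auto)
  have "ennreal (measure_pmf.expectation (bind_pmf M N) f) = (\<integral>\<^sup>+x. ennreal (f x) \<partial>bind_pmf M N)"
    by (rule nn_integral_eq_integral[OF int1, symmetric]) (use assms in auto)
  also have "\<dots> = (\<integral>\<^sup>+x. \<integral>\<^sup>+y. ennreal (f y) \<partial>N x \<partial>M)" by simp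
  also have "\<dots> = (\<integral>\<^sup>+x. ennreal (measure_pmf.expectation (N x) f) \<partial>M)"
    by (intro nn_integral_cong nn_integral_eq_integral[OF int1]) (use assms in auto)
  also have "\<dots> = ennreal (measure_pmf.expectation M (\<lambda>x. measure_pmf.expectation (N x) f))"
    by (rule nn_integral_eq_integral[OF int2]) (use nn in auto)
  finally show ?thesis using nn by (simp add: ennreal_inj)
qed

lemma prob_bind_le:
  assumes "\<And>x. x \<in> set_pmf M \<Longrightarrow> measure_pmf.prob (N x) X \<le> c"
  shows "measure_pmf.prob (bind_pmf M N) X \<le> c"
proof -
  have "measure_pmf.prob (bind_pmf M N) X = measure_pmf.expectation M (\<lambda>x. measure_pmf.prob (N x) X)"
    by (rule prob_bind_pmf)
  also have "\<dots> \<le> measure_pmf.expectation M (\<lambda>x. c)"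
    by (rule integral_mono_AE) (auto intro!: measure_pmf.integrable_const_bound[where B=1] AE_pmfI assms)
  finally show ?thesis by simp
qed

lemma prob_mono_supp:
  assumes "\<And>x. x \<in> A \<Longrightarrow> x \<in> set_pmf M \<Longrightarrow> x \<in> B"
  shows "measure_pmf.prob M A \<le> measure_pmf.prob M B"
proof -
  have "measure_pmf.prob M A = measure_pmf.prob M (A \<inter> set_pmf M)" by (simp add: measure_Int_set_pmf)
  also have "\<dots> \<le> measure_pmf.prob M B" by (rule measure_pmf.finite_measure_mono) (use assms in auto)
  finally show ?thesis .
qed


lemma down_closed_nat:
  assumes "finite S" "\<And>i j. i \<in> S \<Longrightarrow> j < i \<Longrightarrow> j \<in> S"
  shows "S = {..<card S}"
proof
  show "S \<subseteq> {..<card S}"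
  proof
    fix i assume "i \<in> S"
    then have "{..i} \<subseteq> S" using assms(2) by (auto simp: le_less)
    then have "card {..i} \<le> card S" using assms(1) by (rule card_mono[rotated])
    then show "i \<in> {..<card S}" by simp
  qed
next
  show "{..<card S} \<subseteq> S"
  proof
    fix n assume n: "n \<in> {..<card S}"
    show "n \<in> S"
    proof (rule ccontr)
      assume "n \<notin> S"
      then have "S \<subseteq> {..<n}" using assms(2) by (force simp: not_less le_less)
      then have "card S \<le> n" using card_mono[of "{..<n}" S] by simp
      then show False using n by simp
    qed
  qed
qed

lemma children_eq:
  assumes "ordered_tree T" "x \<in> T"
  shows "{i. x @ [i] \<in> T} = {..<num_children T x}"
  unfolding num_children_def
  by (rule down_closed_nat) (use assms in \<open>auto simp: ordered_tree_def\<close>)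

lemma tree_prefix_closed:
  assumes "ordered_tree T" shows "x @ y \<in> T \<Longrightarrow> x \<in> T"
proof (induction y rule: rev_induct)
  case Nil then show ?case by simp
next
  case (snoc a y)
  then show ?case using assms unfolding ordered_tree_def by (metis append_assoc)
qed

lemma root_children_pos:
  assumes "ordered_tree T" "infinite T"
  shows "num_children T [] > 0"
proof (rule ccontr)
  assume "\<not> ?thesis"
  moreover have "[] \<in> T" using assms(1) by (simp add: ordered_tree_def)
  ultimately have "{i. [] @ [i] \<in> T} = {}" using children_eq[OF assms(1), of "[]"]
    by simp
  then have "T \<subseteq> {[]}"
  proof (intro subsetI)
    fix x assume x: "x \<in> T" and e: "{i. [] @ [i] \<in> T} = {}"
    show "x \<in> {[]}"
    proof (cases x)
      case (Cons a t)
      then have "[a] \<in> T" using tree_prefix_closed[OF assms(1), of "[a]" t] x by simp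
      then show ?thesis using e by auto
    qed simp
  qed
  then show False using assms(2) finite_subset by blast
qed

lemma set_pmf_step:
  assumes "ordered_tree T" "infinite T" "x \<in> T" "lam > 0" "y \<in> set_pmf (lbrw_step T lam x)"
  shows "y \<in> T \<and> nb x y"
proof (cases "x = []")
  case True
  have k: "num_children T [] > 0" by (rule root_children_pos) (use assms in auto)
  have fin: "finite {[i] | i. i < num_children T []}" by simp
  have ne: "{[i] | i. i < num_children T []} \<noteq> {}" using k by auto
  from assms(5) True obtain i where "y = [i]" "i < num_children T []"
    unfolding lbrw_step_def using set_pmf_of_set[OF ne fin] by auto
  then show ?thesis using children_eq[OF assms(1,3)] True by (auto simp: nb_def)
next
  case False
  define k where "k = num_children T x"
  let ?p = "lam / (lam + real k)"
  have step: "lbrw_step T lam x = bind_pmf (bernoulli_pmf ?p)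
             (\<lambda>b. if b then return_pmf (butlast x) else pmf_of_set {x @ [i] | i. i < k})"
    unfolding k_def lbrw_step_def using False by simp
  from assms(5) obtain b where b: "b \<in> set_pmf (bernoulli_pmf ?p)"
    and y: "y \<in> set_pmf (if b then return_pmf (butlast x) else pmf_of_set {x @ [i] | i. i < k})"
    unfolding step by auto
  show ?thesis
  proof (cases b)
    case True
    then have "y = butlast x" using y by simp
    moreover have "butlast x \<in> T" using tree_prefix_closed[OF assms(1), of "butlast x" "[last x]"]
      assms(3) False by (simp add: append_butlast_last_id)
    ultimately show ?thesis using False by (simp add: nb_def)
  next
    case bF: False
    have "k > 0"
    proof (rule ccontr)
      assume "\<not> k > 0"
      then have "?p = 1" using assms(4) by simp
      then have "pmf (bernoulli_pmf ?p) False = 0" by simp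
      then show False using b bF by (simp add: set_pmf_eq)
    qed
    then have ne: "{x @ [i] | i. i < k} \<noteq> {}" by auto
    have fin: "finite {x @ [i] | i. i < k}" by simp
    from y bF obtain i where "y = x @ [i]" "i < k" using set_pmf_of_set[OF ne fin] by auto
    then show ?thesis using children_eq[OF assms(1,3)] by (auto simp: nb_def k_def)
  qed
qed

lemma integral_return_pmf': "measure_pmf.expectation (return_pmf x) (f :: _ \<Rightarrow> real) = f x"
  by (simp add: integral_measure_pmf_real[where A="{x}"])

lemma integral_step:
  fixes f :: "nat list \<Rightarrow> real"
  assumes "x \<noteq> []" "lam > 0" "\<And>y. 0 \<le> f y" "\<And>y. f y \<le> B"
  shows "measure_pmf.expectation (lbrw_step T lam x) f =
     (lam * f (butlast x) + (\<Sum>i<num_children T x. f (x @ [i]))) / (lam + num_children T x)"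
proof -
  define k where "k = num_children T x"
  let ?p = "lam / (lam + real k)"
  let ?C = "{x @ [i] | i. i < k}"
  have step: "lbrw_step T lam x = bind_pmf (bernoulli_pmf ?p)
             (\<lambda>b. if b then return_pmf (butlast x) else pmf_of_set ?C)"
    unfolding k_def lbrw_step_def using assms(1) by simp
  have p01: "0 \<le> ?p" "?p \<le> 1" using assms(2) by auto
  have "measure_pmf.expectation (lbrw_step T lam x) f =
     measure_pmf.expectation (bernoulli_pmf ?p) (\<lambda>b. measure_pmf.expectation
        (if b then return_pmf (butlast x) else pmf_of_set ?C) f)"
    unfolding step by (rule integral_bind_pmf_nn[OF assms(3,4)])
  also have "\<dots> = f (butlast x) * ?p + measure_pmf.expectation (pmf_of_set ?C) f * (1 - ?p)"
    using p01 by (simp add: integral_return_pmf')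
  also have "\<dots> = (lam * f (butlast x) + (\<Sum>i<k. f (x @ [i]))) / (lam + k)"
  proof (cases "k = 0")
    case True
    then show ?thesis using assms(2) by simp
  next
    case False
    have Ceq: "?C = (\<lambda>i. x @ [i]) ` {..<k}" by auto
    have inj: "inj_on (\<lambda>i. x @ [i]) {..<k}" by (auto simp: inj_on_def)
    have ne: "?C \<noteq> {}" using False by auto
    have "measure_pmf.expectation (pmf_of_set ?C) f = sum f ?C / card ?C"
      by (rule integral_pmf_of_set[OF ne]) simp
    also have "\<dots> = (\<Sum>i<k. f (x @ [i])) / k"
      unfolding Ceq by (simp add: sum.reindex[OF inj] card_image[OF inj])
    finally have e: "measure_pmf.expectation (pmf_of_set ?C) f = (\<Sum>i<k. f (x @ [i])) / k" .
    have "lam + k > 0" using assms(2) by simp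
    then have h1: "1 - ?p = real k / (lam + k)" by (simp add: field_simps)
    have h2: "(\<Sum>i<k. f (x @ [i])) / k * (real k / (lam + k)) = (\<Sum>i<k. f (x @ [i])) / (lam + k)"
      using False by simp
    show ?thesis unfolding e h1 h2 by (simp add: add_divide_distrib)
  qed
  finally show ?thesis by (simp add: k_def)
qed


definition phi :: "real \<Rightarrow> nat \<Rightarrow> real" where
  "phi lam j = (\<Sum>i<j. lam ^ i)"

lemma phi_Suc: "phi lam (Suc j) = phi lam j + lam ^ j"
  by (simp add: phi_def)

lemma phi_nonneg: "lam > 0 \<Longrightarrow> 0 \<le> phi lam j"
  by (simp add: phi_def sum_nonneg)

lemma phi_mono: "lam > 0 \<Longrightarrow> j \<le> j' \<Longrightarrow> phi lam j \<le> phi lam j'"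
  unfolding phi_def by (rule sum_mono2) auto

lemma phi_pos: "lam > 0 \<Longrightarrow> l \<ge> 1 \<Longrightarrow> 0 < phi lam l"
proof -
  assume "lam > 0" "l \<ge> 1"
  then have "phi lam 1 \<le> phi lam l" by (intro phi_mono) auto
  then show ?thesis by (simp add: phi_def)
qed

lemma phi_one: "phi lam 1 = 1" by (simp add: phi_def)

definition psi :: "real \<Rightarrow> nat \<Rightarrow> nat \<Rightarrow> nat list \<Rightarrow> nat list \<Rightarrow> real" where
  "psi lam l a z x = (if a < length x \<and> take a x = take a z
      then phi lam (min l (cpl x z - a)) / phi lam l else 0)"

lemma psi_nonneg: "lam > 0 \<Longrightarrow> 0 \<le> psi lam l a z x"
  by (simp add: psi_def phi_nonneg)

lemma psi_le1: "lam > 0 \<Longrightarrow> l \<ge> 1 \<Longrightarrow> psi lam l a z x \<le> 1"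
  unfolding psi_def using phi_pos[of lam l] phi_mono[of lam "min l (cpl x z - a)" l]
  by (auto simp: divide_le_eq_1)

lemma psi_z: "lam > 0 \<Longrightarrow> l \<ge> 1 \<Longrightarrow> length z = a + l \<Longrightarrow> psi lam l a z z = 1"
  unfolding psi_def using phi_pos[of lam l] by (simp add: cpl_self)

lemma take_butlast': "a \<le> length (butlast x) \<Longrightarrow> take a (butlast x) = take a x"
  by (simp add: butlast_conv_take min_def split: if_split_asm)

lemma psi_superharmonic:
  assumes lam: "lam > 1" and l: "l \<ge> 1" and lz: "length z = a + l"
    and ax: "a < length x" and xz: "x \<noteq> z"
  shows "lam * psi lam l a z (butlast x) + (\<Sum>i<K. psi lam l a z (x @ [i]))
          \<le> (lam + K) * psi lam l a z x"
proof (cases "take a x = take a z")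
  case False
  have b: "psi lam l a z (butlast x) = 0"
    unfolding psi_def using False take_butlast'[of a x] by auto
  have c: "psi lam l a z (x @ [i]) = 0" for i
    unfolding psi_def using False ax by auto
  show ?thesis using b c False by (simp add: psi_def)
next
  case True
  define c where "c = cpl x z"
  define j where "j = min l (c - a)"
  have lam0: "lam > 0" using lam by simp
  have P: "0 < phi lam l" by (rule phi_pos[OF lam0 l])
  have ca: "a \<le> c" unfolding c_def by (rule cpl_ge[OF True]) (use ax lz in auto)
  have psix: "psi lam l a z x = phi lam j / phi lam l"
    unfolding psi_def j_def c_def using True ax by simp
  have cx: "c \<le> length x" unfolding c_def by (rule cpl_le1)
  have cpre: "c = length x \<Longrightarrow> length x < length z"
  proof (rule ccontr)
    assume "c = length x" "\<not> length x < length z"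
    then have "take (length x) x = take (length x) z" using cpl_take[of "length x" x z] c_def by simp
    then have "x = z" using \<open>\<not> length x < length z\<close> cpl_le2[of x z] \<open>c = length x\<close> c_def by simp
    then show False using xz by simp
  qed
  have K1: "psi lam l a z (x @ [i]) \<le> (phi lam j + (if c = length x \<and> i = z ! length x then lam ^ j else 0)) / phi lam l" for i
  proof -
    have t: "take a (x @ [i]) = take a z" using True ax by simp
    have e: "psi lam l a z (x @ [i]) = phi lam (min l (cpl (x @ [i]) z - a)) / phi lam l"
      unfolding psi_def using t ax by simp
    show ?thesis
    proof (cases "c = length x \<and> i = z ! length x")
      case True
      then have "cpl (x @ [i]) z = Suc (length x)" using cpl_snoc[of x i z] cpre c_def by simp
      then have "min l (cpl (x @ [i]) z - a) \<le> Suc j" using True ax unfolding j_def by auto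
      then have "phi lam (min l (cpl (x @ [i]) z - a)) \<le> phi lam (Suc j)" by (rule phi_mono[OF lam0])
      then show ?thesis unfolding e using True P by (simp add: phi_Suc divide_right_mono)
    next
      case False
      then have "cpl (x @ [i]) z = c" using cpl_snoc[of x i z] c_def by auto
      then have "psi lam l a z (x @ [i]) = phi lam j / phi lam l" unfolding e j_def by simp
      then show ?thesis using False by (simp only: if_False if_not_P) simp
    qed
  qed
  have sumK: "(\<Sum>i<K. psi lam l a z (x @ [i])) \<le> (K * phi lam j + (if c = length x then lam ^ j else 0)) / phi lam l"
  proof -
    have "(\<Sum>i<K. psi lam l a z (x @ [i])) \<le> (\<Sum>i<K. (phi lam j + (if c = length x \<and> i = z ! length x then lam ^ j else 0)) / phi lam l)"
      by (rule sum_mono) (rule K1)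
    also have "\<dots> = (K * phi lam j + (\<Sum>i<K. (if c = length x \<and> i = z ! length x then lam ^ j else 0))) / phi lam l"
      by (simp add: sum_divide_distrib[symmetric] sum.distrib)
    also have "(\<Sum>i<K. (if c = length x \<and> i = z ! length x then lam ^ j else 0)) \<le> (if c = length x then lam ^ j else 0)"
    proof (cases "c = length x")
      case True
      have "(\<Sum>i<K. (if c = length x \<and> i = z ! length x then lam ^ j else 0)) = (\<Sum>i<K. (if i = z ! length x then lam ^ j else 0))"
        using True by simp
      also have "\<dots> = (if z ! length x \<in> {..<K} then lam ^ j else 0)" by (subst sum.delta) auto
      also have "\<dots> \<le> lam ^ j" using lam0 by simp
      finally show ?thesis using True by simp
    qed simp
    then have "(K * phi lam j + (\<Sum>i<K. (if c = length x \<and> i = z ! length x then lam ^ j else 0))) / phi lam l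
       \<le> (K * phi lam j + (if c = length x then lam ^ j else 0)) / phi lam l"
      using P by (intro divide_right_mono) auto
    finally show ?thesis .
  qed
  have K2: "psi lam l a z (butlast x) \<le> (if c = length x then phi lam (j - 1) else phi lam j) / phi lam l"
  proof (cases "a < length (butlast x)")
    case False
    then have "psi lam l a z (butlast x) = 0" by (simp add: psi_def)
    then show ?thesis using P phi_nonneg[OF lam0] by simp
  next
    case abx: True
    have t: "take a (butlast x) = take a z" using True take_butlast'[of a x] abx by simp
    have e: "psi lam l a z (butlast x) = phi lam (min l (cpl (butlast x) z - a)) / phi lam l"
      unfolding psi_def using t abx by simp
    define b where "b = butlast x"
    have xs: "x = b @ [last x]" unfolding b_def using ax by (intro append_butlast_last_id[symmetric]) auto
    have lb: "length x = Suc (length b)" using ax unfolding b_def by simp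
    have cs: "c = (if cpl b z = length b \<and> length b < length z \<and> z ! length b = last x
        then Suc (length b) else cpl b z)"
    proof -
      have "c = cpl (b @ [last x]) z" unfolding c_def using xs by (rule arg_cong[where f="\<lambda>x. cpl x z"])
      then show ?thesis by (simp only: cpl_snoc)
    qed
    have cb: "cpl b z \<le> length b" by (rule cpl_le1)
    show ?thesis
    proof (cases "c = length x")
      case True
      have "cpl b z = length b"
      proof (rule ccontr)
        assume "cpl b z \<noteq> length b"
        then have "c = cpl b z" using cs by simp
        then show False using True cb lb by simp
      qed
      then have "min l (cpl b z - a) = j - 1"
        using True cpre ax lz lb unfolding j_def by auto
      then show ?thesis using e unfolding b_def[symmetric] using True by simp
    next
      case False
      have "cpl b z = c"
      proof (cases "cpl b z = length b \<and> length b < length z \<and> z ! length b = last x")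
        case True
        then have "c = Suc (length b)" using cs by simp
        then show ?thesis using False lb by simp
      next
        case False
        then show ?thesis using cs by simp
      qed
      then show ?thesis using e unfolding b_def[symmetric] using False j_def by simp
    qed
  qed
  show ?thesis
  proof (cases "c = length x")
    case True
    have j1: "j \<ge> 1" using True ax cpre lz l unfolding j_def by auto
    have ph: "phi lam j = phi lam (j - 1) + lam ^ (j - 1)" using j1 phi_Suc[of lam "j - 1"] by simp
    have pw: "lam * lam ^ (j - 1) = lam ^ j" using j1 by (simp add: power_eq_if)
    have "lam * psi lam l a z (butlast x) + (\<Sum>i<K. psi lam l a z (x @ [i]))
      \<le> lam * (phi lam (j - 1) / phi lam l) + (K * phi lam j + lam ^ j) / phi lam l"
      using K2 sumK True lam0 by (intro add_mono mult_left_mono) auto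
    also have "\<dots> = (lam * phi lam (j - 1) + lam ^ j + K * phi lam j) / phi lam l"
      by (simp add: add_divide_distrib algebra_simps)
    also have "lam * phi lam (j - 1) + lam ^ j = lam * phi lam j"
      using ph pw by (simp add: algebra_simps)
    also have "(lam * phi lam j + K * phi lam j) / phi lam l = (lam + K) * psi lam l a z x"
      unfolding psix by (simp add: algebra_simps)
    finally show ?thesis .
  next
    case False
    have "lam * psi lam l a z (butlast x) + (\<Sum>i<K. psi lam l a z (x @ [i]))
      \<le> lam * (phi lam j / phi lam l) + (K * phi lam j) / phi lam l"
      using K2 sumK False lam0 by (intro add_mono mult_left_mono) auto
    also have "\<dots> = (lam + K) * psi lam l a z x"
      unfolding psix by (simp add: add_divide_distrib algebra_simps)
    finally show ?thesis .
  qed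
qed


definition Ev :: "nat \<Rightarrow> nat list \<Rightarrow> nat \<Rightarrow> nat list list set" where
  "Ev a z k = {zs. \<exists>t\<le>k. zs ! t = z \<and> (\<forall>s\<le>t. a < length (zs ! s))}"

lemma q_bound:
  assumes lam: "lam > 1" and l: "l \<ge> 1" and lz: "length z = a + l"
  shows "measure_pmf.prob (lbrw_path T lam (return_pmf x) k) (Ev a z k) \<le> psi lam l a z x"
  using assms
proof (induction k arbitrary: x)
  case 0
  have lam0: "lam > 0" using lam by simp
  have eq: "lbrw_path T lam (return_pmf x) 0 = return_pmf [x]" by simp
  show ?case
  proof (cases "x = z \<and> a < length x")
    case True
    then have "psi lam l a z x = 1" using psi_z[OF lam0 l lz] by simp
    then show ?thesis by simp
  next
    case False
    then have "[x] \<notin> Ev a z 0" by (auto simp: Ev_def)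
    then show ?thesis unfolding eq using psi_nonneg[OF lam0] by simp
  qed
next
  case (Suc k)
  have lam0: "lam > 0" using lam by simp
  show ?case
  proof (cases "x = z")
    case True
    then have "psi lam l a z x = 1" using psi_z[OF lam0 l lz] by simp
    then show ?thesis by simp
  next
    case xz: False
    show ?thesis
    proof (cases "a < length x")
      case False
      have "measure_pmf.prob (lbrw_path T lam (return_pmf x) (Suc k)) (Ev a z (Suc k)) \<le>
            measure_pmf.prob (lbrw_path T lam (return_pmf x) (Suc k)) {}"
      proof (rule prob_mono_supp)
        fix zs assume "zs \<in> Ev a z (Suc k)" "zs \<in> set_pmf (lbrw_path T lam (return_pmf x) (Suc k))"
        then show "zs \<in> {}" using lbrw_path_supp0[of zs T lam "return_pmf x" "Suc k"] False
          by (auto simp: Ev_def)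
      qed
      then show ?thesis using psi_nonneg[OF lam0, of l a z x] by simp
    next
      case ax: True
      define F where "F = {zs. x # zs \<in> Ev a z (Suc k)}"
      define r where "r y = measure_pmf.prob (lbrw_path T lam (return_pmf y) k) F" for y
      have FE: "F \<subseteq> Ev a z k"
      proof
        fix zs assume "zs \<in> F"
        then obtain t where t: "t \<le> Suc k" "(x # zs) ! t = z" "\<forall>s\<le>t. a < length ((x # zs) ! s)"
          by (auto simp: F_def Ev_def)
        then obtain t' where t': "t = Suc t'" using xz by (cases t) auto
        have "\<forall>s\<le>t'. a < length (zs ! s)"
        proof (intro allI impI)
          fix s assume "s \<le> t'"
          then show "a < length (zs ! s)" using t(3) t' by (metis Suc_le_mono nth_Cons_Suc)
        qed
        then show "zs \<in> Ev a z k" using t t' by (auto simp: Ev_def)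
      qed
      have rle: "r y \<le> psi lam l a z y" for y
      proof -
        have "r y \<le> measure_pmf.prob (lbrw_path T lam (return_pmf y) k) (Ev a z k)"
          unfolding r_def by (rule measure_pmf.finite_measure_mono[OF FE]) simp
        also have "\<dots> \<le> psi lam l a z y" by (rule Suc.IH[OF Suc.prems])
        finally show ?thesis .
      qed
      have r0: "0 \<le> r y" "r y \<le> 1" for y unfolding r_def by auto
      have xne: "x \<noteq> []" using ax by auto
      have "measure_pmf.prob (lbrw_path T lam (return_pmf x) (Suc k)) (Ev a z (Suc k))
          = measure_pmf.expectation (lbrw_step T lam x) r"
        unfolding lbrw_path_first prob_bind_pmf measure_map_pmf r_def F_def vimage_def by simp
      also have "\<dots> = (lam * r (butlast x) + (\<Sum>i<num_children T x. r (x @ [i]))) / (lam + num_children T x)"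
        by (rule integral_step[OF xne lam0 r0])
      also have "\<dots> \<le> (lam * psi lam l a z (butlast x) + (\<Sum>i<num_children T x. psi lam l a z (x @ [i]))) / (lam + num_children T x)"
        using lam0 rle by (intro divide_right_mono add_mono mult_left_mono sum_mono) auto
      also have "\<dots> \<le> (lam + num_children T x) * psi lam l a z x / (lam + num_children T x)"
        by (intro divide_right_mono psi_superharmonic[OF lam l lz ax xz]) (use lam0 in simp)
      also have "\<dots> = psi lam l a z x" using lam0
        by (metis add_pos_nonneg nonzero_mult_div_cancel_left of_nat_0_le_iff order_less_irrefl)
      finally show ?thesis .
    qed
  qed
qed

lemma psi_nb_le:
  assumes lam: "lam > 0" and l: "l \<ge> 1" and "nb w y"
  shows "psi lam l (length w) z y \<le> 1 / phi lam l"
proof -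
  have P: "0 < phi lam l" by (rule phi_pos[OF lam l])
  from assms(3) consider "w \<noteq> []" "y = butlast w" | i where "y = w @ [i]" unfolding nb_def by blast
  then show ?thesis
  proof cases
    case 1
    then have "psi lam l (length w) z y = 0" unfolding psi_def by auto
    then show ?thesis using P by simp
  next
    case (2 i)
    have c: "cpl y z \<le> Suc (length w)" using cpl_le1[of y z] 2 by simp
    have "phi lam (min l (cpl y z - length w)) \<le> phi lam 1"
      by (rule phi_mono[OF lam]) (use c in auto)
    then have "phi lam (min l (cpl y z - length w)) / phi lam l \<le> 1 / phi lam l"
    proof -
      have "phi lam (Suc 0) = 1" by (simp add: phi_def)
      then show ?thesis using P \<open>phi lam (min l (cpl y z - length w)) \<le> phi lam 1\<close>
        by (simp add: divide_right_mono)
    qed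
    then show ?thesis unfolding psi_def using P by auto
  qed
qed

lemma escape:
  assumes T: "ordered_tree T" "infinite T" and w: "w \<in> T" and lam: "lam > 1" and l: "l \<ge> 1"
    and lz: "length z = length w + l" and k: "k \<ge> 1"
  shows "measure_pmf.prob (lbrw_path T lam (return_pmf w) k)
     {zs. \<exists>t. 0 < t \<and> t \<le> k \<and> zs ! t = z \<and> (\<forall>s. 0 < s \<and> s \<le> t \<longrightarrow> length w < length (zs ! s))}
     \<le> 1 / phi lam l"
proof -
  obtain k' where k': "k = Suc k'" using k by (cases k) auto
  have lam0: "lam > 0" using lam by simp
  let ?G = "{zs. \<exists>t. 0 < t \<and> t \<le> k \<and> zs ! t = z \<and> (\<forall>s. 0 < s \<and> s \<le> t \<longrightarrow> length w < length (zs ! s))}"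
  have ex: "lbrw_path T lam (return_pmf w) k = bind_pmf (lbrw_step T lam w)
     (\<lambda>y. map_pmf (\<lambda>zs. w # zs) (lbrw_path T lam (return_pmf y) k'))"
    unfolding k' by (rule lbrw_path_first)
  show ?thesis unfolding ex
  proof (rule prob_bind_le)
    fix y assume y: "y \<in> set_pmf (lbrw_step T lam w)"
    have nby: "nb w y" using set_pmf_step[OF T w lam0 y] by simp
    have "measure_pmf.prob (map_pmf (\<lambda>zs. w # zs) (lbrw_path T lam (return_pmf y) k')) ?G
        = measure_pmf.prob (lbrw_path T lam (return_pmf y) k') ((\<lambda>zs. w # zs) -` ?G)" by simp
    also have "\<dots> \<le> measure_pmf.prob (lbrw_path T lam (return_pmf y) k') (Ev (length w) z k')"
    proof (rule measure_pmf.finite_measure_mono)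
      show "(\<lambda>zs. w # zs) -` ?G \<subseteq> Ev (length w) z k'"
      proof
        fix zs assume "zs \<in> (\<lambda>zs. w # zs) -` ?G"
        then obtain t where t: "0 < t" "t \<le> k" "(w # zs) ! t = z"
            "\<forall>s. 0 < s \<and> s \<le> t \<longrightarrow> length w < length ((w # zs) ! s)" by auto
        then obtain t' where t': "t = Suc t'" by (cases t) auto
        have "\<forall>s\<le>t'. length w < length (zs ! s)"
        proof (intro allI impI)
          fix s assume "s \<le> t'"
          then show "length w < length (zs ! s)" using t(4)[rule_format, of "Suc s"] t' by simp
        qed
        then show "zs \<in> Ev (length w) z k'" using t t' k' by (auto simp: Ev_def)
      qed
    qed simp
    also have "\<dots> \<le> psi lam l (length w) z y" by (rule q_bound[OF lam l lz])
    also have "\<dots> \<le> 1 / phi lam l" by (rule psi_nb_le[OF lam0 l nby])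
    finally show "measure_pmf.prob (map_pmf (\<lambda>zs. w # zs) (lbrw_path T lam (return_pmf y) k')) ?G \<le> 1 / phi lam l" .
  qed
qed


lemma nb_len: "nb u v \<Longrightarrow> length v = Suc (length u) \<or> Suc (length v) = length u"
  unfolding nb_def by auto

lemma take_const:
  assumes adj: "\<And>i. a \<le> i \<Longrightarrow> i < b \<Longrightarrow> nb (Y i) (Y (Suc i))"
    and hs: "\<And>i. a \<le> i \<Longrightarrow> i \<le> b \<Longrightarrow> H \<le> length (Y i)"
  shows "a \<le> t \<Longrightarrow> t \<le> b \<Longrightarrow> take H (Y t) = take H (Y a)"
proof (induction t)
  case 0
  then show ?case by simp
next
  case (Suc t)
  show ?case
  proof (cases "a = Suc t")
    case True then show ?thesis by simp
  next
    case False
    then have at: "a \<le> t" "t < b" using Suc.prems by auto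
    have IH: "take H (Y t) = take H (Y a)" using Suc.IH at by simp
    have n: "nb (Y t) (Y (Suc t))" using adj at by simp
    have h1: "H \<le> length (Y (Suc t))" using hs Suc.prems by simp
    have "take H (Y (Suc t)) = take H (Y t)"
      using n h1 unfolding nb_def
    proof (elim disjE exE conjE)
      assume "Y (Suc t) = butlast (Y t)" "H \<le> length (Y (Suc t))"
      then show ?thesis using take_butlast'[of H "Y t"] by simp
    next
      fix i assume "Y (Suc t) = Y t @ [i]" "H \<le> length (Y (Suc t))"
      then show ?thesis using hs[of t] at by simp
    qed
    then show ?thesis using IH by simp
  qed
qed

lemma comb:
  fixes Y :: "nat \<Rightarrow> nat list"
  assumes adj: "\<And>i. n1 \<le> i \<Longrightarrow> i < n2 \<Longrightarrow> nb (Y i) (Y (Suc i))"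
    and n12: "n1 < n2" and l: "l \<ge> 1"
    and hc: "Min {length (Y n) | n. n1 \<le> n \<and> n \<le> n2} + l \<le> cpl (Y n1) (Y n2)"
  shows "\<exists>m. n1 \<le> m \<and> m < n2 \<and> take (length (Y m)) (Y n1) = Y m \<and> length (Y m) + l \<le> length (Y n1) \<and>
     (\<exists>t. m < t \<and> t \<le> n2 \<and> Y t = take (length (Y m) + l) (Y n1) \<and>
        (\<forall>s. m < s \<and> s \<le> n2 \<and> s \<le> t \<longrightarrow> length (Y m) < length (Y s)))"
proof -
  define S where "S = {length (Y n) | n. n1 \<le> n \<and> n \<le> n2}"
  define h where "h = Min S"
  have finS: "finite S" unfolding S_def by simp
  have neS: "S \<noteq> {}" unfolding S_def using n12 by auto
  have hS: "h \<in> S" unfolding h_def using finS neS by simp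
  have hle: "h \<le> length (Y n)" if "n1 \<le> n" "n \<le> n2" for n
    unfolding h_def using finS that by (intro Min_le) (auto simp: S_def)
  have hc': "h + l \<le> cpl (Y n1) (Y n2)" using hc unfolding h_def S_def .
  define x where "x = Y n1"
  define y where "y = Y n2"
  have cx: "h + l \<le> length x" using hc' cpl_le1[of x y] unfolding x_def y_def by simp
  have cy: "h + l \<le> length y" using hc' cpl_le2[of x y] unfolding x_def y_def by simp
  have txy: "take (h + l) x = take (h + l) y" using cpl_take[OF hc'] unfolding x_def y_def .
  define M where "M = {m. n1 \<le> m \<and> m \<le> n2 \<and> length (Y m) = h}"
  have finM: "finite M" unfolding M_def by simp
  have neM: "M \<noteq> {}" using hS unfolding M_def S_def by auto
  define m where "m = Max M"
  have mM: "m \<in> M" unfolding m_def using finM neM by simp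
  have mmax: "s \<le> m" if "s \<in> M" for s unfolding m_def using finM that by simp
  have m1: "n1 \<le> m" "m \<le> n2" "length (Y m) = h" using mM unfolding M_def by auto
  have tm: "take h (Y m) = take h (Y n1)"
    by (rule take_const[where a=n1 and b=n2 and Y=Y and H=h]) (use adj hle m1 in auto)
  have wm: "take (length (Y m)) (Y n1) = Y m" using tm m1 by simp
  have mn2: "m < n2"
  proof (rule ccontr)
    assume "\<not> m < n2"
    then have "m = n2" using m1 by simp
    then show False using m1 cy l unfolding y_def by simp
  qed
  have above: "h < length (Y s)" if "m < s" "s \<le> n2" for s
  proof -
    have "h \<le> length (Y s)" using hle that m1 by simp
    moreover have "length (Y s) \<noteq> h"
    proof
      assume "length (Y s) = h"
      then have "s \<in> M" using that m1 unfolding M_def by simp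
      then show False using mmax that by fastforce
    qed
    ultimately show ?thesis by simp
  qed
  have lm1: "length (Y (Suc m)) = Suc h"
    using nb_len[OF adj[of m]] m1 mn2 above[of "Suc m"] by auto
  define M2 where "M2 = {t. m < t \<and> t \<le> n2 \<and> length (Y t) \<le> h + l}"
  have finM2: "finite M2" unfolding M2_def by simp
  have sM2: "Suc m \<in> M2" unfolding M2_def using lm1 mn2 l by simp
  define t where "t = Max M2"
  have tM2: "t \<in> M2" unfolding t_def using finM2 sM2 by (metis Max_in empty_iff)
  have tmax: "s \<le> t" if "s \<in> M2" for s unfolding t_def using finM2 that by simp
  have t1: "m < t" "t \<le> n2" "length (Y t) \<le> h + l" using tM2 unfolding M2_def by auto
  have Yt: "Y t = take (h + l) x"
  proof (cases "t = n2")
    case True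
    then have "length y = h + l" using t1 cy unfolding y_def by simp
    then show ?thesis using txy True unfolding y_def by simp
  next
    case False
    then have tn: "t < n2" using t1 by simp
    have big: "h + l < length (Y s)" if "t < s" "s \<le> n2" for s
    proof (rule ccontr)
      assume "\<not> h + l < length (Y s)"
      then have "s \<in> M2" using that t1 unfolding M2_def by simp
      then show False using tmax that by fastforce
    qed
    have b1: "h + l < length (Y (Suc t))" using big tn by simp
    have nbt: "nb (Y t) (Y (Suc t))" using adj t1 m1 tn by simp
    then obtain i where Yst: "Y (Suc t) = Y t @ [i]"
      using b1 t1 unfolding nb_def by auto
    have lt: "length (Y t) = h + l" using Yst b1 t1 by simp
    have "take (h + l) (Y n2) = take (h + l) (Y (Suc t))"
    proof (rule take_const[where a="Suc t" and b=n2 and Y=Y and H="h + l"])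
      fix i assume "Suc t \<le> i" "i < n2" then show "nb (Y i) (Y (Suc i))" using adj t1 m1 by simp
    next
      fix i assume "Suc t \<le> i" "i \<le> n2" then show "h + l \<le> length (Y i)" using big[of i] by simp
    qed (use tn in auto)
    also have "\<dots> = Y t" using Yst lt by simp
    finally show ?thesis using txy unfolding y_def by simp
  qed
  show ?thesis
  proof (intro exI conjI)
    show "n1 \<le> m" "m < n2" by (fact m1(1), fact mn2)
    show "take (length (Y m)) (Y n1) = Y m" by (fact wm)
    show "length (Y m) + l \<le> length (Y n1)" using cx m1 unfolding x_def by simp
    show "m < t" "t \<le> n2" by (fact t1(1), fact t1(2))
    show "Y t = take (length (Y m) + l) (Y n1)" using Yt m1 unfolding x_def by simp
    show "\<forall>s. m < s \<and> s \<le> n2 \<and> s \<le> t \<longrightarrow> length (Y m) < length (Y s)"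
      using above m1 by simp
  qed
qed

definition Dd :: "nat list \<Rightarrow> nat list \<Rightarrow> real" where
  "Dd u v = real (length u) + real (length v) - 2 * real (cpl u v)"

lemma Dd_snoc: "\<bar>Dd (u @ [i]) y - Dd u y\<bar> \<le> 1"
  unfolding Dd_def using cpl_snoc[of u i y] by auto

lemma Dd_adj: assumes "tree_adj T u v" shows "Dd u y \<le> Dd v y + 1"
proof -
  from assms obtain i where "v = u @ [i] \<or> u = v @ [i]" unfolding tree_adj_def by blast
  then show ?thesis
  proof
    assume "v = u @ [i]" then show ?thesis using Dd_snoc[of u i y] by (simp add: abs_le_iff)
  next
    assume "u = v @ [i]" then show ?thesis using Dd_snoc[of v i y] by (simp add: abs_le_iff)
  qed
qed

lemma Dd_self: "Dd u u = 0"
  unfolding Dd_def by (simp add: cpl_self)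

lemma Dd_path: "tree_path T ps \<Longrightarrow> Dd (hd ps) (last ps) \<le> real (length ps) - 1"
proof (induction ps)
  case Nil
  then show ?case by (simp add: tree_path_def)
next
  case (Cons a ps)
  show ?case
  proof (cases "ps = []")
    case True
    then show ?thesis by (simp add: Dd_self)
  next
    case False
    have tp: "tree_path T ps" unfolding tree_path_def
    proof (intro conjI allI impI)
      show "ps \<noteq> []" by (fact False)
      show "set ps \<subseteq> T" using Cons.prems unfolding tree_path_def by simp
      fix k assume "Suc k < length ps"
      then have "Suc (Suc k) < length (a # ps)" by simp
      then have "tree_adj T ((a # ps) ! Suc k) ((a # ps) ! Suc (Suc k))"
        using Cons.prems unfolding tree_path_def by blast
      then show "tree_adj T (ps ! k) (ps ! Suc k)" by simp
    qed
    have adj: "tree_adj T a (hd ps)"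
    proof -
      have "Suc 0 < length (a # ps)" using False by simp
      then have "tree_adj T ((a # ps) ! 0) ((a # ps) ! Suc 0)"
        using Cons.prems unfolding tree_path_def by blast
      then show ?thesis using False by (simp add: hd_conv_nth)
    qed
    have "Dd a (last ps) \<le> Dd (hd ps) (last ps) + 1" by (rule Dd_adj[OF adj])
    also have "\<dots> \<le> real (length ps) - 1 + 1" using Cons.IH[OF tp] by simp
    finally show ?thesis using False by simp
  qed
qed

lemma d_gr_lower:
  assumes "tree_path T ps" "hd ps = x" "last ps = y"
  shows "Dd x y \<le> real (d_gr T x y)"
proof -
  let ?P = "\<lambda>n. \<exists>ps. tree_path T ps \<and> hd ps = x \<and> last ps = y \<and> length ps = Suc n"
  have "?P (length ps - 1)" using assms by (intro exI[of _ ps]) (auto simp: tree_path_def)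
  then have "?P (d_gr T x y)" unfolding d_gr_def by (rule LeastI)
  then obtain qs where "tree_path T qs" "hd qs = x" "last qs = y" "length qs = Suc (d_gr T x y)" by blast
  then show ?thesis using Dd_path[of T qs] by simp
qed


lemma path_supp:
  assumes T: "ordered_tree T" "infinite T" and lam: "lam > 0" and mu: "set_pmf mu \<subseteq> T"
  shows "ys \<in> set_pmf (lbrw_path T lam mu n) \<Longrightarrow>
    length ys = Suc n \<and> (\<forall>i\<le>n. ys ! i \<in> T) \<and> (\<forall>i<n. nb (ys ! i) (ys ! Suc i))"
proof (induction n arbitrary: ys)
  case 0
  then show ?case using mu by auto
next
  case (Suc n)
  from Suc.prems obtain ys' y where ys': "ys' \<in> set_pmf (lbrw_path T lam mu n)"
    and y: "y \<in> set_pmf (lbrw_step T lam (last ys'))" and ys: "ys = ys' @ [y]" by auto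
  have IH: "length ys' = Suc n" "\<forall>i\<le>n. ys' ! i \<in> T" "\<forall>i<n. nb (ys' ! i) (ys' ! Suc i)"
    using Suc.IH[OF ys'] by auto
  have "ys' \<noteq> []" using IH(1) by auto
  then have lst: "last ys' = ys' ! n" using IH(1) by (simp add: last_conv_nth)
  have lT: "last ys' \<in> T" using lst IH(2) by simp
  have yy: "y \<in> T" "nb (ys' ! n) y" using set_pmf_step[OF T lT lam y] lst by auto
  have "\<forall>i\<le>Suc n. ys ! i \<in> T"
  proof (intro allI impI)
    fix i assume "i \<le> Suc n"
    then show "ys ! i \<in> T" using IH yy unfolding ys by (cases "i \<le> n") (auto simp: nth_append)
  qed
  moreover have "\<forall>i<Suc n. nb (ys ! i) (ys ! Suc i)"
  proof (intro allI impI)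
    fix i assume i: "i < Suc n"
    show "nb (ys ! i) (ys ! Suc i)"
    proof (cases "i < n")
      case True then show ?thesis using IH unfolding ys by (simp add: nth_append)
    next
      case False then have "i = n" using i by simp
      then show ?thesis using IH yy unfolding ys by (simp add: nth_append)
    qed
  qed
  ultimately show ?case using IH(1) ys by simp
qed

definition Bset :: "nat \<Rightarrow> nat \<Rightarrow> nat \<Rightarrow> nat \<Rightarrow> nat list list set" where
  "Bset n1 n2 l m = {ys. take (length (ys ! m)) (ys ! n1) = ys ! m \<and> length (ys ! m) + l \<le> length (ys ! n1) \<and>
     (\<exists>t. m < t \<and> t \<le> n2 \<and> ys ! t = take (length (ys ! m) + l) (ys ! n1) \<and>
        (\<forall>s. m < s \<and> s \<le> n2 \<and> s \<le> t \<longrightarrow> length (ys ! m) < length (ys ! s)))}"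

lemma Bm_bound:
  assumes T: "ordered_tree T" "infinite T" and lam: "lam > 1" and l: "l \<ge> 1"
    and mu: "set_pmf mu \<subseteq> T" and m: "n1 \<le> m" "m < n2"
  shows "measure_pmf.prob (lbrw_path T lam mu n2) (Bset n1 n2 l m) \<le> 1 / phi lam l"
proof -
  have lam0: "lam > 0" using lam by simp
  define k where "k = n2 - m"
  have n2: "n2 = m + k" "k \<ge> 1" using m unfolding k_def by auto
  have P: "lbrw_path T lam mu n2 = bind_pmf (lbrw_path T lam mu m)
     (\<lambda>ys. map_pmf (\<lambda>zs. ys @ tl zs) (lbrw_path T lam (return_pmf (last ys)) k))"
    unfolding n2(1) by (rule lbrw_path_stitch)
  show ?thesis unfolding P
  proof (rule prob_bind_le)
    fix ys assume ys: "ys \<in> set_pmf (lbrw_path T lam mu m)"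
    note S = path_supp[OF T lam0 mu ys]
    define w where "w = last ys"
    define x where "x = ys ! n1"
    have "ys \<noteq> []" using S by auto
    then have wm: "w = ys ! m" unfolding w_def using S by (simp add: last_conv_nth)
    have wT: "w \<in> T" using S wm by simp
    let ?Q = "lbrw_path T lam (return_pmf w) k"
    have idx: "(ys @ tl zs) ! i = ys ! i" if "i \<le> m" for i zs
      using that S by (simp add: nth_append)
    have idx2: "(ys @ tl zs) ! t = zs ! (t - m)" if "m < t" "length zs = Suc k" "t \<le> m + k" for t zs
    proof -
      have "(ys @ tl zs) ! t = tl zs ! (t - Suc m)" using that S by (simp add: nth_append)
      also have "\<dots> = zs ! Suc (t - Suc m)" using that by (simp add: nth_tl)
      also have "Suc (t - Suc m) = t - m" using that by simp
      finally show ?thesis .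
    qed
    have "measure_pmf.prob (map_pmf (\<lambda>zs. ys @ tl zs) ?Q) (Bset n1 n2 l m)
        = measure_pmf.prob ?Q ((\<lambda>zs. ys @ tl zs) -` Bset n1 n2 l m)" by simp
    also have "\<dots> \<le> 1 / phi lam l"
    proof (cases "take (length w) x = w \<and> length w + l \<le> length x")
      case False
      have "measure_pmf.prob ?Q ((\<lambda>zs. ys @ tl zs) -` Bset n1 n2 l m) \<le> measure_pmf.prob ?Q {}"
      proof (rule prob_mono_supp)
        fix zs assume "zs \<in> (\<lambda>zs. ys @ tl zs) -` Bset n1 n2 l m"
        then have "take (length w) x = w \<and> length w + l \<le> length x"
          unfolding Bset_def x_def wm using idx[of m zs] idx[of n1 zs] m by simp
        then show "zs \<in> {}" using False by simp
      qed
      moreover have "0 \<le> 1 / phi lam l" using phi_pos[OF lam0 l] by simp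
      ultimately show ?thesis using measure_empty[of "measure_pmf (lbrw_path T lam (return_pmf w) k)"] by linarith
    next
      case True
      define z where "z = take (length w + l) x"
      have lz: "length z = length w + l" unfolding z_def using True by simp
      have "measure_pmf.prob ?Q ((\<lambda>zs. ys @ tl zs) -` Bset n1 n2 l m) \<le>
        measure_pmf.prob ?Q {zs. \<exists>t. 0 < t \<and> t \<le> k \<and> zs ! t = z \<and> (\<forall>s. 0 < s \<and> s \<le> t \<longrightarrow> length w < length (zs ! s))}"
      proof (rule prob_mono_supp)
        fix zs assume zB: "zs \<in> (\<lambda>zs. ys @ tl zs) -` Bset n1 n2 l m" and zS: "zs \<in> set_pmf ?Q"
        have lzs: "length zs = Suc k" using lbrw_path_supp0[OF zS] by simp
        from zB obtain t where t: "m < t" "t \<le> n2" "(ys @ tl zs) ! t = take (length w + l) x"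
          "\<forall>s. m < s \<and> s \<le> n2 \<and> s \<le> t \<longrightarrow> length w < length ((ys @ tl zs) ! s)"
          unfolding Bset_def using idx[of m zs] idx[of n1 zs] m wm x_def by auto
        show "zs \<in> {zs. \<exists>t. 0 < t \<and> t \<le> k \<and> zs ! t = z \<and> (\<forall>s. 0 < s \<and> s \<le> t \<longrightarrow> length w < length (zs ! s))}"
        proof (intro CollectI exI[of _ "t - m"] conjI allI impI)
          show "0 < t - m" "t - m \<le> k" using t n2 by auto
          show "zs ! (t - m) = z" using t(3) idx2[of t zs] t n2 lzs unfolding z_def by simp
          fix s assume s: "0 < s \<and> s \<le> t - m"
          have "m < m + s \<and> m + s \<le> n2 \<and> m + s \<le> t" using s t by auto
          then have "length w < length ((ys @ tl zs) ! (m + s))" using t(4) by blast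
          moreover have "(ys @ tl zs) ! (m + s) = zs ! s"
          proof -
            have "s \<le> k" using s t n2 by linarith
            then show ?thesis using idx2[of "m + s" zs] s lzs by simp
          qed
          ultimately show "length w < length (zs ! s)" by simp
        qed
      qed
      also have "\<dots> \<le> 1 / phi lam l" by (rule escape[OF T wT lam l lz n2(2)])
      finally show ?thesis .
    qed
    finally show "measure_pmf.prob (map_pmf (\<lambda>zs. ys @ tl zs) (lbrw_path T lam (return_pmf (last ys)) k))
       (Bset n1 n2 l m) \<le> 1 / phi lam l" unfolding w_def .
  qed
qed


theorem lemma3p17:
  fixes T :: "nat list set" and lam :: real and mu :: "nat list pmf"
    and l n1 n2 :: nat
  assumes "ordered_tree T" and "infinite T"
    and "lam > 1"
    and "set_pmf mu \<subseteq> T"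
    and "lbrw_recurrent T lam"
    and "l \<ge> 1"
    and "n1 < n2"
  shows "measure_pmf.prob (lbrw_path T lam mu n2)
           {ys. real (height (ys ! n1)) + real (height (ys ! n2))
                  - 2 * real (Min {height (ys ! n) | n. n1 \<le> n \<and> n \<le> n2})
                \<ge> 2 * real l + real (d_gr T (ys ! n1) (ys ! n2))}
         \<le> real (n2 - n1) * (lam - 1) / (lam ^ l - 1)"
proof -
  note T = assms(1,2) and lam = assms(3) and mu = assms(4) and l = assms(6) and n12 = assms(7)
  have lam0: "lam > 0" using lam by simp
  let ?P = "lbrw_path T lam mu n2"
  let ?A = "{ys. real (height (ys ! n1)) + real (height (ys ! n2))
                  - 2 * real (Min {height (ys ! n) | n. n1 \<le> n \<and> n \<le> n2})
                \<ge> 2 * real l + real (d_gr T (ys ! n1) (ys ! n2))}"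
  have step1: "measure_pmf.prob ?P ?A \<le> measure_pmf.prob ?P (\<Union>m\<in>{n1..<n2}. Bset n1 n2 l m)"
  proof (rule prob_mono_supp)
    fix ys assume yA: "ys \<in> ?A" and yS: "ys \<in> set_pmf ?P"
    note S = path_supp[OF T lam0 mu yS]
    define ps where "ps = map (\<lambda>i. ys ! i) [n1..<Suc n2]"
    have lps: "length ps = Suc n2 - n1" unfolding ps_def using n12 by simp
    have psk: "ps ! k = ys ! (n1 + k)" if "k < Suc n2 - n1" for k
      unfolding ps_def using that by (simp del: upt_Suc)
    have tp: "tree_path T ps" unfolding tree_path_def
    proof (intro conjI allI impI)
      show "ps \<noteq> []" using n12 lps by auto
      show "set ps \<subseteq> T" unfolding ps_def using S by auto
      fix k assume k: "Suc k < length ps"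
      have a: "ps ! k = ys ! (n1 + k)" "ps ! Suc k = ys ! Suc (n1 + k)" using k lps psk by auto
      have nbk: "nb (ys ! (n1 + k)) (ys ! Suc (n1 + k))" using S k lps by auto
      have inT: "ys ! (n1 + k) \<in> T" "ys ! Suc (n1 + k) \<in> T" using S k lps by auto
      show "tree_adj T (ps ! k) (ps ! Suc k)" unfolding a tree_adj_def using nbk inT unfolding nb_def
        by (metis append_butlast_last_id)
    qed
    have psne: "ps \<noteq> []" using n12 lps by auto
    have hd: "hd ps = ys ! n1" using psk[of 0] lps n12 psne by (simp add: hd_conv_nth)
    have lst: "last ps = ys ! n2" using psk[of "n2 - n1"] lps n12 psne by (simp add: last_conv_nth)
    have Dle: "Dd (ys ! n1) (ys ! n2) \<le> real (d_gr T (ys ! n1) (ys ! n2))"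
      by (rule d_gr_lower[OF tp hd lst])
    define h where "h = Min {length (ys ! n) | n. n1 \<le> n \<and> n \<le> n2}"
    have "real (length (ys ! n1)) + real (length (ys ! n2)) - 2 * real h \<ge> 2 * real l + real (d_gr T (ys ! n1) (ys ! n2))"
      using yA unfolding h_def height_def by simp
    then have "real h + real l \<le> real (cpl (ys ! n1) (ys ! n2))" using Dle unfolding Dd_def by linarith
    then have hc: "h + l \<le> cpl (ys ! n1) (ys ! n2)" by linarith
    have adj: "\<And>i. n1 \<le> i \<Longrightarrow> i < n2 \<Longrightarrow> nb (ys ! i) (ys ! Suc i)" using S by auto
    from comb[of n1 n2 "\<lambda>i. ys ! i", OF adj n12 l] hc[unfolded h_def]
    obtain m where "n1 \<le> m" "m < n2" "ys \<in> Bset n1 n2 l m"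
      unfolding Bset_def by blast
    then show "ys \<in> (\<Union>m\<in>{n1..<n2}. Bset n1 n2 l m)" by auto
  qed
  also have "\<dots> \<le> (\<Sum>m\<in>{n1..<n2}. measure_pmf.prob ?P (Bset n1 n2 l m))"
    by (rule measure_pmf.finite_measure_subadditive_finite) auto
  also have "\<dots> \<le> (\<Sum>m\<in>{n1..<n2}. 1 / phi lam l)"
    by (rule sum_mono, rule Bm_bound[OF T lam l mu]) auto
  also have "\<dots> = real (n2 - n1) * (lam - 1) / (lam ^ l - 1)"
  proof -
    have "lam ^ l > 1" using lam l by (simp add: one_less_power)
    then have "phi lam l = (lam ^ l - 1) / (lam - 1)"
      unfolding phi_def using lam by (simp add: sum_gp_strict field_simps)
    then show ?thesis by simp
  qed
  finally show ?thesis .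
qed

end
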